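(* Let $\lambda_1,\dots,\lambda_n>0$ and $\Lambda=\big(\lambda_i\lambda_j+(\lambda_i\lambda_j)^{-1}\big)_{i,j=1}^n$. Then $I(sp,\Lambda)=\min\{M_1,M_2\}$, where $M_1=\min_i(\lambda_i^2+\lambda_i^{-2})$ and $$M_2=\inf\Big\{\frac{(\lambda_i+\lambda_j)^2}{1+\lambda_i^2\lambda_j^2}: \lambda_i<1<\lambda_j,\ \lambda_i^2\le\frac{1}{\lambda_i\lambda_j}\le\lambda_j^2\Big\}$$ (with $\inf\emptyset=+\infty$). In particular, if all $\lambda_i\ge1$ or all $\lambda_i\le1$, then $I(sp,\Lambda)=M_1$.
   Context: $\circ$ is the Hadamard product; $I(sp,C)=\min\{\|C\circ B\|: B \text{ positive semidefinite } n\times n,\ \|B\|=1\}$ with $\|\cdot\|$ the spectral norm. *)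

theory Defs
  imports "HOL-Analysis.Analysis"
begin

definition hadamard :: "complex^'n^'n \<Rightarrow> complex^'n^'n \<Rightarrow> complex^'n^'n" where
  "hadamard A B = (\<chi> i j. A$i$j * B$i$j)"

definition spec_norm :: "complex^'n^'n \<Rightarrow> real" where
  "spec_norm A = onorm (\<lambda>x. A *v x)"

definition psd :: "complex^'n^'n \<Rightarrow> bool" where
  "psd B \<longleftrightarrow> (\<forall>i j. B$i$j = cnj (B$j$i)) \<and>
              (\<forall>x::complex^'n. 0 \<le> Re (\<Sum>i\<in>UNIV. cnj (x$i) * (B *v x)$i))"

definition I_sp :: "complex^'n^'n \<Rightarrow> real" where
  "I_sp C = Inf {spec_norm (hadamard C B) | B. psd B \<and> spec_norm B = 1}"

end

theory Submission imports Defs begin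

lemma inner_cvec: "inner (x::complex^'n) y = Re (\<Sum>i\<in>UNIV. cnj (x$i) * y$i)"
  by (simp add: inner_vec_def inner_complex_def)

lemma mv_linear: "linear (\<lambda>x. (A::complex^'n^'n) *v x)"
  apply (rule linearI)
  apply (simp add: matrix_vector_right_distrib)
  apply (simp add: vec_eq_iff matrix_vector_mult_def scaleR_sum_right)
  done

lemma mv_bl: "bounded_linear (\<lambda>x. (A::complex^'n^'n) *v x)"
  using mv_linear linear_conv_bounded_linear by blast

lemma spec_norm_bound: "norm (A *v x) \<le> spec_norm A * norm x"
  unfolding spec_norm_def by (rule onorm[OF mv_bl])

lemma spec_norm_nonneg: "0 \<le> spec_norm A"
  unfolding spec_norm_def by (rule onorm_pos_le[OF mv_bl])

lemma spec_norm_le: "(\<And>x. norm (A *v x) \<le> b * norm x) \<Longrightarrow> spec_norm A \<le> b"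
  unfolding spec_norm_def by (rule onorm_le)

lemma spec_norm_attained:
  fixes A :: "complex^'n^'n"
  shows "\<exists>z. norm z = 1 \<and> norm (A *v z) = spec_norm A"
proof -
  have "compact (sphere (0::complex^'n) 1)" by simp
  moreover have "sphere (0::complex^'n) 1 \<noteq> {}" by simp
  moreover have "continuous_on (sphere (0::complex^'n) 1) (\<lambda>x. norm (A *v x))"
    by (intro continuous_on_norm linear_continuous_on mv_bl)
  ultimately obtain z where z: "z \<in> sphere 0 1" and zmax: "\<And>y. y \<in> sphere 0 1 \<Longrightarrow> norm (A *v y) \<le> norm (A *v z)"
    using continuous_attains_sup[of "sphere (0::complex^'n) 1" "\<lambda>x. norm (A *v x)"] by auto
  have nz: "norm z = 1" using z by simp
  have "spec_norm A \<le> norm (A *v z)"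
  proof (rule spec_norm_le)
    fix x :: "complex^'n"
    show "norm (A *v x) \<le> norm (A *v z) * norm x"
    proof (cases "x = 0")
      case True then show ?thesis by simp
    next
      case False
      then have nx: "norm x > 0" by simp
      have "(inverse (norm x) *\<^sub>R x) \<in> sphere 0 1" using nx by (simp add: dist_norm)
      then have "norm (A *v (inverse (norm x) *\<^sub>R x)) \<le> norm (A *v z)" by (rule zmax)
      moreover have "A *v (inverse (norm x) *\<^sub>R x) = inverse (norm x) *\<^sub>R (A *v x)"
        using linear_scale[OF mv_linear] by blast
      ultimately have "inverse (norm x) * norm (A *v x) \<le> norm (A *v z)" using nx by simp
      then show ?thesis using nx by (simp add: field_simps)
    qed
  qed
  moreover have "norm (A *v z) \<le> spec_norm A" using spec_norm_bound[of A z] nz by simp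
  ultimately show ?thesis using nz by auto
qed

lemma psd_herm:
  assumes "psd B" shows "inner x (B *v y) = inner (B *v x) y"
proof -
  have h: "\<And>i j. B$i$j = cnj (B$j$i)" using assms unfolding psd_def by blast
  have e1: "(\<Sum>i\<in>UNIV. cnj (x$i) * (B *v y)$i) = (\<Sum>i\<in>UNIV. \<Sum>j\<in>UNIV. cnj (x$i) * B$i$j * y$j)"
    unfolding matrix_vector_mult_def by (simp add: sum_distrib_left mult.assoc)
  have e2: "(\<Sum>i\<in>UNIV. \<Sum>j\<in>UNIV. cnj (x$i) * B$i$j * y$j) = (\<Sum>j\<in>UNIV. \<Sum>i\<in>UNIV. cnj (x$i) * B$i$j * y$j)" by (rule sum.swap)
  have e3: "(\<Sum>i\<in>UNIV. cnj (x$i) * B$i$j * y$j) = cnj ((B *v x)$j) * y$j" for j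
  proof -
    have "cnj ((B *v x)$j) = (\<Sum>i\<in>UNIV. cnj (B$j$i) * cnj (x$i))"
      unfolding matrix_vector_mult_def by (simp add: cnj_sum)
    also have "\<dots> = (\<Sum>i\<in>UNIV. B$i$j * cnj (x$i))" 
      by (rule sum.cong[OF refl]) (subst h, simp)
    finally have "cnj ((B *v x)$j) * y$j = (\<Sum>i\<in>UNIV. B$i$j * cnj (x$i)) * y$j" by simp
    also have "\<dots> = (\<Sum>i\<in>UNIV. B$i$j * cnj (x$i) * y$j)" by (rule sum_distrib_right)
    finally show ?thesis by (simp add: ac_simps)
  qed
  have "(\<Sum>i\<in>UNIV. cnj (x$i) * (B *v y)$i) = (\<Sum>j\<in>UNIV. cnj ((B *v x)$j) * y$j)"
    using e1 e2 e3 by simp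
  then show ?thesis by (simp only: inner_cvec)
qed

lemma psd_nonneg: "psd B \<Longrightarrow> 0 \<le> inner x (B *v x)"
  by (simp add: psd_def inner_cvec)

lemma psd_cs:
  assumes "psd B" and "inner z (B *v z) \<le> 1"
  shows "(inner (B *v z) x)^2 \<le> inner x (B *v x)"
proof -
  define t where "t = inner (B *v z) x"
  have lin: "B *v (x - t *\<^sub>R z) = B *v x - t *\<^sub>R (B *v z)"
    using linear_diff[OF mv_linear] linear_scale[OF mv_linear] by metis
  have s1: "inner x (B *v z) = t" unfolding t_def by (simp add: inner_commute)
  have s2: "inner z (B *v x) = t" unfolding t_def using psd_herm[OF assms(1)] by simp
  have "0 \<le> inner (x - t *\<^sub>R z) (B *v (x - t *\<^sub>R z))" by (rule psd_nonneg[OF assms(1)])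
  also have "\<dots> = inner x (B *v x) - 2 * t * t + t * t * inner z (B *v z)"
    unfolding lin by (simp add: inner_diff_left inner_diff_right s1 s2 algebra_simps)
  also have "\<dots> \<le> inner x (B *v x) - t * t"
    using assms(2) mult_left_mono[OF assms(2), of "t*t"] by simp
  finally have "0 \<le> inner x (B *v x) - t * t" .
  then show ?thesis unfolding t_def[symmetric] power2_eq_square by linarith
qed


definition dg :: "('n::finite \<Rightarrow> real) \<Rightarrow> complex^'n \<Rightarrow> complex^'n" where
  "dg f x = (\<chi> i. complex_of_real (f i) * x$i)"

lemma dg_dg: "dg f (dg g x) = dg (\<lambda>i. f i * g i) x"
  by (simp add: dg_def vec_eq_iff)

lemma inner_dg: "inner (dg g w) (dg h w) = (\<Sum>i\<in>UNIV. g i * h i * (cmod (w$i))^2)"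
proof -
  have "\<And>i. Re (cnj (complex_of_real (g i) * w$i) * (complex_of_real (h i) * w$i)) = g i * h i * (cmod (w$i))^2"
    by (simp add: cmod_power2) (simp add: algebra_simps power2_eq_square)
  then show ?thesis by (simp add: inner_cvec dg_def)
qed

lemma dg_one: "dg (\<lambda>i. 1) w = w"
  by (simp add: dg_def vec_eq_iff)

lemma had_id:
  fixes B :: "complex^'n::finite^'n"
  shows "inner y (hadamard (\<chi> i j. complex_of_real (u i * u j + v i * v j)) B *v y)
     = inner (dg u y) (B *v dg u y) + inner (dg v y) (B *v dg v y)"
proof -
  have "(\<Sum>i\<in>UNIV. cnj (y$i) * (hadamard (\<chi> i j. complex_of_real (u i * u j + v i * v j)) B *v y)$i)
    = (\<Sum>i\<in>UNIV. cnj ((dg u y)$i) * (B *v dg u y)$i) + (\<Sum>i\<in>UNIV. cnj ((dg v y)$i) * (B *v dg v y)$i)"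
    by (simp add: hadamard_def matrix_vector_mult_def dg_def sum_distrib_left sum.distrib[symmetric] algebra_simps)
  then show ?thesis by (simp add: inner_cvec)
qed


lemma real_finish:
  fixes c d P Q m s :: real
  assumes hs: "(c*P + d)^2 + (c + d*Q)^2 \<le> s * (c^2*P + 2*c*d + d^2*Q)"
    and hL: "m * (c^2 + d^2) \<le> c^2*P + 2*c*d + d^2*Q"
    and hcd: "c^2 + d^2 > 0" and s0: "0 \<le> s"
  shows "m \<le> s"
proof (cases "m \<le> 0")
  case True then show ?thesis using s0 by linarith
next
  case False
  define L where "L = c^2*P + 2*c*d + d^2*Q"
  have Lpos: "L > 0" using hL hcd False unfolding L_def
    by (smt (verit) mult_pos_pos)
  have eq: "c*(c*P + d) + d*(c + d*Q) = L" unfolding L_def by (simp add: algebra_simps power2_eq_square)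
  have cs: "(c*(c*P + d) + d*(c + d*Q))^2 \<le> (c^2+d^2) * ((c*P + d)^2 + (c + d*Q)^2)"
  proof -
    have "0 \<le> (c*(c + d*Q) - d*(c*P + d))^2" by simp
    then show ?thesis by (simp add: algebra_simps power2_eq_square)
  qed
  then have "L^2 \<le> (c^2+d^2) * (s * L)" using eq hs unfolding L_def
    by (smt (verit) hcd mult_left_mono)
  then have "L * L \<le> L * ((c^2+d^2) * s)" by (simp add: power2_eq_square algebra_simps)
  then have "L \<le> (c^2+d^2) * s" using Lpos by simp
  then have "m * (c^2 + d^2) \<le> s * (c^2+d^2)" using hL unfolding L_def by (simp add: algebra_simps)
  then show ?thesis using hcd by simp
qed

lemma lower_bound:
  fixes lam :: "'n::finite \<Rightarrow> real" and B :: "complex^'n^'n"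
  assumes pos: "\<And>i. lam i > 0" and pB: "psd B" and nB: "spec_norm B = 1"
  and H: "\<And>t. (\<And>i. t i \<ge> 0) \<Longrightarrow> (\<Sum>i\<in>UNIV. t i) = 1 \<Longrightarrow> \<exists>c d. c^2+d^2 > 0 \<and>
           m*(c^2+d^2) \<le> c^2*(\<Sum>i\<in>UNIV. t i * lam i^2) + 2*c*d + d^2*(\<Sum>i\<in>UNIV. t i / lam i^2)"
  shows "m \<le> spec_norm (hadamard (\<chi> i j. complex_of_real (lam i * lam j + 1 / (lam i * lam j))) B)"
proof -
  obtain z where nz: "norm z = 1" and nBz: "norm (B *v z) = 1"
    using spec_norm_attained[of B] nB by auto
  define w where "w = B *v z"
  have kzz: "inner z (B *v z) \<le> 1" using norm_cauchy_schwarz[of z "B *v z"] nz nBz by simp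
  have cs: "\<And>x. (inner w x)^2 \<le> inner x (B *v x)" unfolding w_def by (rule psd_cs[OF pB kzz])
  define t where "t i = (cmod (w$i))^2" for i
  have t0: "\<And>i. t i \<ge> 0" unfolding t_def by simp
  have "inner w w = (\<Sum>i\<in>UNIV. t i)"
    using inner_dg[of "\<lambda>i. 1" w "\<lambda>i. 1"] by (simp add: dg_one t_def)
  moreover have "inner w w = 1" using nBz unfolding w_def by (simp add: power2_norm_eq_inner[symmetric])
  ultimately have t1: "(\<Sum>i\<in>UNIV. t i) = 1" by simp
  define P where "P = (\<Sum>i\<in>UNIV. t i * lam i^2)"
  define Q where "Q = (\<Sum>i\<in>UNIV. t i / lam i^2)"
  obtain c d where hcd: "c^2+d^2 > 0" and hL: "m*(c^2+d^2) \<le> c^2*P + 2*c*d + d^2*Q"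
    using H[OF t0 t1] unfolding P_def Q_def by blast
  define y where "y = dg (\<lambda>i. c * lam i + d / lam i) w"
  define A where "A = hadamard (\<chi> i j. complex_of_real (lam i * lam j + 1 / (lam i * lam j))) B"
  have lamne: "\<And>i. lam i \<noteq> 0" using pos by (metis less_irrefl)
  have Aeq: "A = hadamard (\<chi> i j. complex_of_real (lam i * lam j + (1 / lam i) * (1 / lam j))) B"
    unfolding A_def by simp
  have yy: "inner y y = c^2*P + 2*c*d + d^2*Q"
  proof -
    have "inner y y = (\<Sum>i\<in>UNIV. (c * lam i + d / lam i) * (c * lam i + d / lam i) * t i)"
      unfolding y_def inner_dg t_def by simp
    also have "\<dots> = (\<Sum>i\<in>UNIV. c^2 * (t i * lam i^2) + 2*c*d * t i + d^2 * (t i / lam i^2))"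
      by (rule sum.cong[OF refl]) (simp add: field_simps lamne power2_eq_square)
    also have "\<dots> = c^2 * (\<Sum>i\<in>UNIV. t i * lam i^2) + 2*c*d * (\<Sum>i\<in>UNIV. t i) + d^2 * (\<Sum>i\<in>UNIV. t i / lam i^2)"
      by (simp only: sum.distrib sum_distrib_left)
    also have "\<dots> = c^2*P + 2*c*d + d^2*Q"
      by (simp add: P_def Q_def t1)
    finally show ?thesis .
  qed
  have X: "inner w (dg lam y) = c*P + d"
  proof -
    have "inner w (dg lam y) = inner (dg (\<lambda>i. 1) w) (dg (\<lambda>i. lam i * (c * lam i + d / lam i)) w)"
      unfolding y_def dg_dg dg_one ..
    also have "\<dots> = (\<Sum>i\<in>UNIV. 1 * (lam i * (c * lam i + d / lam i)) * t i)"
      unfolding inner_dg t_def ..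
    also have "\<dots> = (\<Sum>i\<in>UNIV. c * (t i * lam i^2) + d * t i)"
      by (rule sum.cong[OF refl]) (simp add: field_simps lamne power2_eq_square)
    also have "\<dots> = c * (\<Sum>i\<in>UNIV. t i * lam i^2) + d * (\<Sum>i\<in>UNIV. t i)"
      by (simp only: sum.distrib sum_distrib_left)
    also have "\<dots> = c*P + d"
      by (simp add: P_def t1)
    finally show ?thesis .
  qed
  have Y: "inner w (dg (\<lambda>i. 1 / lam i) y) = c + d*Q"
  proof -
    have "inner w (dg (\<lambda>i. 1 / lam i) y) = inner (dg (\<lambda>i. 1) w) (dg (\<lambda>i. 1 / lam i * (c * lam i + d / lam i)) w)"
      unfolding y_def dg_dg dg_one ..
    also have "\<dots> = (\<Sum>i\<in>UNIV. 1 * (1 / lam i * (c * lam i + d / lam i)) * t i)"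
      unfolding inner_dg t_def ..
    also have "\<dots> = (\<Sum>i\<in>UNIV. c * t i + d * (t i / lam i^2))"
      by (rule sum.cong[OF refl]) (simp add: field_simps lamne power2_eq_square)
    also have "\<dots> = c * (\<Sum>i\<in>UNIV. t i) + d * (\<Sum>i\<in>UNIV. t i / lam i^2)"
      by (simp only: sum.distrib sum_distrib_left)
    also have "\<dots> = c + d*Q"
      by (simp add: Q_def t1)
    finally show ?thesis .
  qed
  have "(c*P + d)^2 + (c + d*Q)^2 \<le> inner (dg lam y) (B *v dg lam y) + inner (dg (\<lambda>i. 1 / lam i) y) (B *v dg (\<lambda>i. 1 / lam i) y)"
    using cs[of "dg lam y"] cs[of "dg (\<lambda>i. 1 / lam i) y"] X Y by simp
  also have "\<dots> = inner y (A *v y)" unfolding Aeq by (rule had_id[symmetric])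
  also have "\<dots> \<le> norm y * norm (A *v y)" by (rule norm_cauchy_schwarz)
  also have "\<dots> \<le> norm y * (spec_norm A * norm y)" by (rule mult_left_mono[OF spec_norm_bound norm_ge_zero])
  also have "\<dots> = spec_norm A * inner y y" by (simp add: power2_norm_eq_inner[symmetric] power2_eq_square)
  finally have hs: "(c*P + d)^2 + (c + d*Q)^2 \<le> spec_norm A * (c^2*P + 2*c*d + d^2*Q)" unfolding yy .
  show ?thesis using real_finish[OF hs hL hcd spec_norm_nonneg] unfolding A_def .
qed


lemma norm_sq_cvec: "(norm (u::complex^'n))^2 = (\<Sum>i\<in>UNIV. (cmod (u$i))^2)"
  by (simp add: norm_vec_def L2_set_def sum_nonneg)

lemma cmod_sq_lin:
  fixes a b :: complex and p q :: real
  shows "(cmod (complex_of_real p * a + complex_of_real q * b))^2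
       = (p * Re a + q * Re b)^2 + (p * Im a + q * Im b)^2"
  by (simp add: cmod_power2)

lemma rank2_bound:
  fixes p q :: "'n::finite \<Rightarrow> real"
  assumes H: "\<And>s r::real. (\<Sum>i\<in>UNIV. (s * p i + r * q i)^2) \<le> V * (s^2 + r^2)"
  shows "spec_norm ((\<chi> i j. complex_of_real (p i * p j + q i * q j)) :: complex^'n^'n) \<le> V"
proof (rule spec_norm_le)
  fix x :: "complex^'n"
  define A where "A = ((\<chi> i j. complex_of_real (p i * p j + q i * q j)) :: complex^'n^'n)"
  define \<alpha> where "\<alpha> = (\<Sum>j\<in>UNIV. complex_of_real (p j) * x$j)"
  define \<beta> where "\<beta> = (\<Sum>j\<in>UNIV. complex_of_real (q j) * x$j)"
  have V0: "V \<ge> 0"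
  proof -
    have "0 \<le> (\<Sum>i\<in>UNIV. (1 * p i + 0 * q i)^2)" by (intro sum_nonneg) simp
    then show ?thesis using H[of 1 0] by simp
  qed
  have Ax: "A *v x = (\<chi> i. complex_of_real (p i) * \<alpha> + complex_of_real (q i) * \<beta>)"
    unfolding A_def \<alpha>_def \<beta>_def
    by (simp add: vec_eq_iff matrix_vector_mult_def sum_distrib_left distrib_left distrib_right sum.distrib ac_simps)
  define N where "N = (cmod \<alpha>)^2 + (cmod \<beta>)^2"
  have N0: "N \<ge> 0" unfolding N_def by simp
  have nA: "(norm (A *v x))^2 \<le> V * N"
  proof -
    have "(norm (A *v x))^2 = (\<Sum>i\<in>UNIV. (p i * Re \<alpha> + q i * Re \<beta>)^2 + (p i * Im \<alpha> + q i * Im \<beta>)^2)"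
      unfolding norm_sq_cvec Ax by (simp add: cmod_sq_lin)
    also have "\<dots> = (\<Sum>i\<in>UNIV. (Re \<alpha> * p i + Re \<beta> * q i)^2) + (\<Sum>i\<in>UNIV. (Im \<alpha> * p i + Im \<beta> * q i)^2)"
      by (simp add: sum.distrib ac_simps)
    also have "\<dots> \<le> V * ((Re \<alpha>)^2 + (Re \<beta>)^2) + V * ((Im \<alpha>)^2 + (Im \<beta>)^2)"
      by (intro add_mono H)
    also have "\<dots> = V * N" unfolding N_def by (simp add: cmod_power2 algebra_simps)
    finally show ?thesis .
  qed
  have iN: "inner x (A *v x) = N"
  proof -
    have "(\<Sum>i\<in>UNIV. cnj (x$i) * (complex_of_real (p i) * \<alpha> + complex_of_real (q i) * \<beta>))
        = (\<Sum>i\<in>UNIV. complex_of_real (p i) * cnj (x$i)) * \<alpha> + (\<Sum>i\<in>UNIV. complex_of_real (q i) * cnj (x$i)) * \<beta>"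
      by (simp add: distrib_left sum.distrib sum_distrib_right ac_simps) (simp add: sum_distrib_left)
    also have "\<dots> = cnj \<alpha> * \<alpha> + cnj \<beta> * \<beta>"
      unfolding \<alpha>_def \<beta>_def by (simp add: cnj_sum)
    finally have "(\<Sum>i\<in>UNIV. cnj (x$i) * (complex_of_real (p i) * \<alpha> + complex_of_real (q i) * \<beta>))
        = cnj \<alpha> * \<alpha> + cnj \<beta> * \<beta>" .
    moreover have "Re (cnj \<alpha> * \<alpha> + cnj \<beta> * \<beta>) = N"
      unfolding N_def by (simp add: cmod_power2) (simp add: power2_eq_square)
    ultimately show ?thesis unfolding inner_cvec Ax by simp
  qed
  have "N \<le> norm x * norm (A *v x)" using norm_cauchy_schwarz[of x "A *v x"] iN by simp
  from power_mono[OF this N0] have "N^2 \<le> (norm x)^2 * (norm (A *v x))^2"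
    by (simp only: power_mult_distrib)
  also have "\<dots> \<le> (norm x)^2 * (V * N)" by (rule mult_left_mono[OF nA]) simp
  finally have NN: "N * N \<le> N * ((norm x)^2 * V)" by (simp add: power2_eq_square ac_simps)
  have "(norm (A *v x))^2 \<le> (V * norm x)^2"
  proof (cases "N = 0")
    case True
    then have "(norm (A *v x))^2 \<le> 0" using nA by simp
    then show ?thesis using zero_le_power2[of "V * norm x"] by linarith
  next
    case False
    then have "N > 0" using N0 by simp
    then have "N \<le> (norm x)^2 * V" using NN by simp
    then have "V * N \<le> V * ((norm x)^2 * V)" using V0 by (rule mult_left_mono)
    then show ?thesis using nA by (simp add: power2_eq_square ac_simps)
  qed
  then have "norm (A *v x) \<le> V * norm x" by (rule power2_le_imp_le) (use V0 in simp)
  then show "norm (((\<chi> i j. complex_of_real (p i * p j + q i * q j)) :: complex^'n^'n) *v x) \<le> V * norm x"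
    unfolding A_def .
qed


lemma quad2:
  fixes V P Q s r :: real
  assumes "V - P \<ge> 0" "V - Q \<ge> 0" "(V - P) * (V - Q) \<ge> 1"
  shows "s^2*P + 2* s*r + r^2*Q \<le> V*(s^2 + r^2)"
proof -
  define e where "e = V - P"
  define f where "f = V - Q"
  have e0: "e > 0" using assms unfolding e_def f_def
    by (metis less_eq_real_def mult_zero_left not_one_le_zero)
  have ef: "e*f \<ge> 1" using assms unfolding e_def f_def by simp
  have "0 \<le> (e* s - r)^2 + (e*f - 1)*r^2" using ef by (intro add_nonneg_nonneg) auto
  also have "\<dots> = e * (e* s^2 - 2* s*r + f*r^2)" by (simp add: power2_eq_square algebra_simps)
  finally have "0 \<le> e* s^2 - 2* s*r + f*r^2" using e0 by (simp add: zero_le_mult_iff)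
  then show ?thesis unfolding e_def f_def by (simp add: algebra_simps)
qed

definition rk1 :: "('n::finite \<Rightarrow> real) \<Rightarrow> complex^'n^'n" where
  "rk1 w = (\<chi> i j. complex_of_real (w i * w j))"

lemma rk1_psd:
  fixes w :: "'n::finite \<Rightarrow> real"
  shows "psd (rk1 w)"
proof -
  have "0 \<le> Re (\<Sum>i\<in>UNIV. cnj (x$i) * (rk1 w *v x)$i)" for x :: "complex^'n"
  proof -
    define s where "s = (\<Sum>j\<in>UNIV. complex_of_real (w j) * x$j)"
    have "(\<Sum>i\<in>UNIV. cnj (x$i) * (rk1 w *v x)$i) = (\<Sum>i\<in>UNIV. (complex_of_real (w i) * cnj (x$i)) * s)"
      unfolding rk1_def s_def by (simp add: matrix_vector_mult_def sum_distrib_left ac_simps)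
    also have "\<dots> = cnj s * s" unfolding s_def by (simp add: sum_distrib_right[symmetric] cnj_sum)
    finally show ?thesis by (simp add: complex_norm_square[symmetric] mult.commute)
  qed
  moreover have "\<And>i j. (rk1 w)$i$j = cnj ((rk1 w)$j$i)" by (simp add: rk1_def mult.commute)
  ultimately show ?thesis unfolding psd_def by blast
qed

lemma rk1_norm:
  fixes w :: "'n::finite \<Rightarrow> real"
  assumes w1: "(\<Sum>i\<in>UNIV. (w i)^2) = 1"
  shows "spec_norm (rk1 w) = 1"
proof (rule antisym)
  have e: "rk1 w = ((\<chi> i j. complex_of_real (w i * w j + (\<lambda>i. 0) i * (\<lambda>i. 0) j)) :: complex^'n^'n)"
    by (simp add: rk1_def)
  show "spec_norm (rk1 w) \<le> 1" unfolding e
  proof (rule rank2_bound)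
    fix s r :: real
    have "(\<Sum>i\<in>UNIV. (s * w i + r * 0)^2) = s^2 * (\<Sum>i\<in>UNIV. (w i)^2)"
      by (simp add: power_mult_distrib sum_distrib_left)
    also have "\<dots> \<le> 1 * (s^2 + r^2)" using w1 by simp
    finally show "(\<Sum>i\<in>UNIV. (s * w i + r * (\<lambda>i. 0) i)^2) \<le> 1 * (s^2 + r^2)" by simp
  qed
next
  define v where "v = ((\<chi> i. complex_of_real (w i)) :: complex^'n)"
  have nv: "norm v = 1"
  proof -
    have "(norm v)^2 = 1" unfolding norm_sq_cvec v_def using w1 by simp
    then show ?thesis using norm_ge_zero[of v] by (simp add: power2_eq_1_iff)
  qed
  have "rk1 w *v v = v"
  proof -
    have "rk1 w *v v = (\<chi> i. complex_of_real (w i) * complex_of_real (\<Sum>j\<in>UNIV. (w j)^2))"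
      unfolding rk1_def v_def by (simp add: vec_eq_iff matrix_vector_mult_def sum_distrib_left power2_eq_square ac_simps)
    then show ?thesis using w1 by (simp add: v_def)
  qed
  then have "1 \<le> spec_norm (rk1 w) * 1" using spec_norm_bound[of "rk1 w" v] nv by simp
  then show "1 \<le> spec_norm (rk1 w)" by simp
qed

lemma upper_rk1:
  fixes lam :: "'n::finite \<Rightarrow> real" and w :: "'n \<Rightarrow> real"
  assumes pos: "\<And>i. lam i > 0" and w1: "(\<Sum>i\<in>UNIV. (w i)^2) = 1"
    and c1: "V - (\<Sum>i\<in>UNIV. lam i^2 * (w i)^2) \<ge> 0"
    and c2: "V - (\<Sum>i\<in>UNIV. (w i)^2 / lam i^2) \<ge> 0"
    and c3: "(V - (\<Sum>i\<in>UNIV. lam i^2 * (w i)^2)) * (V - (\<Sum>i\<in>UNIV. (w i)^2 / lam i^2)) \<ge> 1"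
  shows "I_sp ((\<chi> i j. complex_of_real (lam i * lam j + 1 / (lam i * lam j))) :: complex^'n^'n) \<le> V"
proof -
  define Lam where "Lam = ((\<chi> i j. complex_of_real (lam i * lam j + 1 / (lam i * lam j))) :: complex^'n^'n)"
  define p where "p i = lam i * w i" for i
  define q where "q i = w i / lam i" for i
  have lamne: "\<And>i. lam i \<noteq> 0" using pos by (metis less_irrefl)
  have e: "hadamard Lam (rk1 w) = ((\<chi> i j. complex_of_real (p i * p j + q i * q j)) :: complex^'n^'n)"
    unfolding Lam_def hadamard_def rk1_def p_def q_def
    by (simp add: vec_eq_iff field_simps lamne)
  have sn: "spec_norm (hadamard Lam (rk1 w)) \<le> V" unfolding e
  proof (rule rank2_bound)
    fix s r :: real
    have "(\<Sum>i\<in>UNIV. (s * p i + r * q i)^2)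
        = (\<Sum>i\<in>UNIV. s^2 * (lam i^2 * (w i)^2) + 2* s*r * (w i)^2 + r^2 * ((w i)^2 / lam i^2))"
      unfolding p_def q_def by (rule sum.cong[OF refl]) (simp add: power2_eq_square field_simps lamne)
    also have "\<dots> = s^2 * (\<Sum>i\<in>UNIV. lam i^2 * (w i)^2) + 2* s*r * (\<Sum>i\<in>UNIV. (w i)^2) + r^2 * (\<Sum>i\<in>UNIV. (w i)^2 / lam i^2)"
      by (simp only: sum.distrib sum_distrib_left)
    also have "\<dots> \<le> V*(s^2 + r^2)" unfolding w1 using quad2[OF c1 c2 c3] by simp
    finally show "(\<Sum>i\<in>UNIV. (s * p i + r * q i)^2) \<le> V*(s^2 + r^2)" .
  qed
  have mem: "spec_norm (hadamard Lam (rk1 w)) \<in> {spec_norm (hadamard Lam B) | B. psd B \<and> spec_norm B = 1}"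
    using rk1_psd rk1_norm[OF w1] by blast
  have bdd: "bdd_below {spec_norm (hadamard Lam B) | B. psd B \<and> spec_norm B = 1}"
    by (rule bdd_belowI[of _ 0]) (auto simp: spec_norm_nonneg)
  have "I_sp Lam \<le> spec_norm (hadamard Lam (rk1 w))"
    unfolding I_sp_def by (rule cInf_lower[OF mem bdd])
  then show ?thesis using sn unfolding Lam_def by simp
qed



lemma vertex_case:
  fixes a b P Q m :: real
  assumes a0: "a > 0" and b0: "b > 0" and coef: "(b^2 - 1/(a*b)) * (P - b) \<ge> 0"
    and hQ: "1/a + 1/b - P/(a*b) \<le> Q" and mb: "m \<le> b + 1/b"
  shows "m*(b^2+1^2) \<le> b^2*P + 2*b*1 + 1^2*Q"
proof -
  define u where "u = 1/(a*b)"
  have hu: "u*b = 1/a" unfolding u_def using b0 by simp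
  have hPu: "P/(a*b) = u*P" unfolding u_def by simp
  have ex: "(b^2 - u) * (P - b) = b^2*P - b^2*b - u*P + u*b" by (simp add: algebra_simps)
  have c: "0 \<le> b^2*P - b^2*b - u*P + u*b" using coef ex unfolding u_def by simp
  have r: "b^2*b + 2*b + 1/b \<le> b^2*P + 2*b + Q" using c hu hQ hPu by linarith
  have bb: "(1/b)*b^2 = b" using b0 by (simp add: power2_eq_square)
  have "(b + 1/b)*(b^2+1) = b^2*b + 2*b + 1/b" 
    by (simp add: algebra_simps bb) (simp add: power2_eq_square)
  moreover have "m*(b^2+1) \<le> (b + 1/b)*(b^2+1)" by (rule mult_right_mono[OF mb]) (simp add: add_nonneg_nonneg)
  ultimately show ?thesis using r by simp
qed


lemma seg_lemma:
  fixes x y P Q m :: real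
  assumes x0: "x > 0" and y0: "y > 0" and xP: "x^2 \<le> P" and Py: "P \<le> y^2"
    and hQ: "1/x^2 + 1/y^2 - P/(x^2*y^2) \<le> Q"
    and mx: "m \<le> x^2 + 1/x^2" and my: "m \<le> y^2 + 1/y^2"
    and hS: "x < 1 \<Longrightarrow> 1 < y \<Longrightarrow> x^2 \<le> 1/(x*y) \<Longrightarrow> 1/(x*y) \<le> y^2 \<Longrightarrow> m \<le> (x+y)^2/(1 + x^2*y^2)"
  shows "\<exists>c d. c^2+d^2 > 0 \<and> m*(c^2+d^2) \<le> c^2*P + 2*c*d + d^2*Q"
proof -
  define a where "a = x^2"
  define b where "b = y^2"
  have a0: "a > 0" unfolding a_def using x0 by simp
  have b0: "b > 0" unfolding b_def using y0 by simp
  have "x^2 \<le> y^2" using xP Py by linarith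
  then have xy: "x \<le> y" using y0 power2_le_imp_le by (metis less_imp_le)
  have hQ': "1/a + 1/b - P/(a*b) \<le> Q" using hQ by (simp add: a_def b_def)
  have abpos: "a*b > 0" using a0 b0 by simp
  show ?thesis
  proof (cases "x*y^3 \<le> 1")
    case True
    have ab: "b^2*(a*b) \<le> 1"
    proof -
      have "b^2*(a*b) = (x*y^3)^2" by (simp add: a_def b_def power2_eq_square power3_eq_cube)
      also have "\<dots> \<le> 1" using True x0 y0 by (simp add: power_le_one)
      finally show ?thesis .
    qed
    have "b^2 \<le> 1/(a*b)" using ab abpos by (simp add: pos_le_divide_eq)
    moreover have Pb: "P \<le> b" using Py by (simp add: b_def)
    ultimately have coef: "(b^2 - 1/(a*b)) * (P - b) \<ge> 0" by (intro mult_nonpos_nonpos) auto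
    have "m \<le> b + 1/b" using my by (simp add: b_def)
    from vertex_case[OF a0 b0 coef hQ' this] have "m*(b^2+1^2) \<le> b^2*P + 2*b*1 + 1^2*Q" .
    moreover have "b^2 + 1^2 > (0::real)" by (simp add: add_nonneg_pos)
    ultimately show ?thesis by blast
  next
    case c1: False
    show ?thesis
    proof (cases "x^3*y \<ge> 1")
      case True
      have ab: "a^2*(b*a) \<ge> 1"
      proof -
        have "a^2*(b*a) = (x^3*y)^2" by (simp add: a_def b_def power2_eq_square power3_eq_cube)
        also have "1 \<le> \<dots>" using True x0 y0 by (simp add: one_le_power)
        finally show ?thesis by simp
      qed
      have baps: "b*a > 0" using abpos by (simp add: mult.commute)
      have "1/(b*a) \<le> a^2" using ab baps by (simp add: pos_divide_le_eq)
      moreover have Pa: "a \<le> P" using xP by (simp add: a_def)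
      ultimately have coef: "(a^2 - 1/(b*a)) * (P - a) \<ge> 0" by (intro mult_nonneg_nonneg) auto
      have hQ'': "1/b + 1/a - P/(b*a) \<le> Q" using hQ' by (simp add: mult.commute add.commute)
      have "m \<le> a + 1/a" using mx by (simp add: a_def)
      from vertex_case[OF b0 a0 coef hQ'' this] have "m*(a^2+1^2) \<le> a^2*P + 2*a*1 + 1^2*Q" .
      moreover have "a^2 + 1^2 > (0::real)" by (simp add: add_nonneg_pos)
      ultimately show ?thesis by blast
    next
      case c2: False
      have x1: "x < 1"
      proof (rule ccontr)
        assume "\<not> x < 1"
        then have "1 \<le> x" "1 \<le> y" using xy by auto
        then have "1 \<le> x^3" by (simp add: one_le_power)
        then have "1 * 1 \<le> x^3*y" using \<open>1 \<le> y\<close> x0 by (intro mult_mono) auto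
        then show False using c2 by simp
      qed
      have y1: "1 < y"
      proof (rule ccontr)
        assume "\<not> 1 < y"
        then have "y \<le> 1" "x \<le> 1" using xy by auto
        then have "x*y^3 \<le> 1" using x0 y0 by (simp add: mult_le_one power_le_one)
        then show False using c1 by simp
      qed
      have xy0: "x*y > 0" using x0 y0 by simp
      have s1: "x^2 \<le> 1/(x*y)"
      proof -
        have "x^2*(x*y) \<le> 1" using c2 by (simp add: power2_eq_square power3_eq_cube ac_simps)
        then show ?thesis using xy0 by (simp add: pos_le_divide_eq)
      qed
      have s2: "1/(x*y) \<le> y^2"
      proof -
        have "1 \<le> y^2*(x*y)" using c1 by (simp add: power2_eq_square power3_eq_cube ac_simps)
        then show ?thesis using xy0 by (simp add: pos_divide_le_eq)
      qed
      have mV: "m \<le> (x+y)^2/(1 + x^2*y^2)" using hS[OF x1 y1 s1 s2] .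
      have d0: "1 + x^2*y^2 > 0" by (simp add: add_pos_nonneg)
      have m1: "m*(1 + x^2*y^2) \<le> (x+y)^2" using mV d0 by (simp add: pos_le_divide_eq)
      have e1: "(x*y)^2*(1/x^2) = y^2" using x0 by (simp add: power_mult_distrib)
      have e2: "(x*y)^2*(1/y^2) = x^2" using y0 by (simp add: power_mult_distrib)
      have e3: "(x*y)^2*(P/(x^2*y^2)) = P" using x0 y0 by (simp add: power_mult_distrib)
      have "(x*y)^2*(1/x^2 + 1/y^2 - P/(x^2*y^2)) \<le> (x*y)^2*Q"
        using mult_left_mono[OF hQ, of "(x*y)^2"] by simp
      moreover have "(x*y)^2*(1/x^2 + 1/y^2 - P/(x^2*y^2)) = y^2 + x^2 - P"
        by (simp only: distrib_left right_diff_distrib e1 e2 e3)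
      ultimately have "y^2 + x^2 - P \<le> (x*y)^2*Q" by simp
      moreover have "(x+y)^2 = x^2 + 2*(x*y) + y^2" by (simp add: power2_eq_square algebra_simps)
      moreover have "(x*y)^2 = x^2*y^2" by (simp add: power_mult_distrib)
      ultimately have "m*(1^2 + (x*y)^2) \<le> 1^2*P + 2*1*(x*y) + (x*y)^2*Q" using m1 by simp
      moreover have "1^2 + (x*y)^2 > (0::real)" by (simp add: add_pos_nonneg)
      ultimately show ?thesis by blast
    qed
  qed
qed


lemma aux:
  fixes X Y z :: real
  assumes X: "X > 0" and Y: "Y > 0" and z: "z > 0" and h: "(z - X) * (z - Y) \<ge> 0"
  shows "1/X + 1/Y - z/(X*Y) \<le> 1/z"
proof -
  have e: "1/X + 1/Y - z/(X*Y) = (Y + X - z)/(X*Y)" using X Y by (simp add: field_simps)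
  have "(Y + X - z) * z \<le> X*Y" using h by (simp add: algebra_simps power2_eq_square)
  then have "(Y + X - z)/(X*Y) \<le> 1/z" using X Y z by (simp add: divide_simps mult.commute)
  then show ?thesis using e by simp
qed

lemma real_H:
  fixes lam :: "'n::finite \<Rightarrow> real" and t :: "'n \<Rightarrow> real"
  assumes pos: "\<And>i. lam i > 0"
    and hM1: "\<And>i. m \<le> lam i ^ 2 + 1 / lam i ^ 2"
    and hS: "\<And>i j. lam i < 1 \<Longrightarrow> 1 < lam j \<Longrightarrow> lam i ^ 2 \<le> 1 / (lam i * lam j) \<Longrightarrow>
               1 / (lam i * lam j) \<le> lam j ^ 2 \<Longrightarrow> m \<le> (lam i + lam j)^2 / (1 + lam i ^ 2 * lam j ^ 2)"
    and t0: "\<And>i. t i \<ge> 0" and t1: "(\<Sum>i\<in>UNIV. t i) = 1"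
  shows "\<exists>c d. c^2+d^2 > 0 \<and>
           m*(c^2+d^2) \<le> c^2*(\<Sum>i\<in>UNIV. t i * lam i^2) + 2*c*d + d^2*(\<Sum>i\<in>UNIV. t i / lam i^2)"
proof -
  define P where "P = (\<Sum>i\<in>UNIV. t i * lam i^2)"
  define Q where "Q = (\<Sum>i\<in>UNIV. t i / lam i^2)"
  have sumP: "(\<Sum>i\<in>UNIV. t i * (lam i^2 - P)) = 0"
    by (simp add: right_diff_distrib sum_subtractf P_def sum_distrib_right[symmetric] t1)
  have Jne: "{i. lam i^2 \<le> P} \<noteq> {}"
  proof
    assume e: "{i. lam i^2 \<le> P} = {}"
    then have gt: "\<And>i. P < lam i^2" by (metis empty_iff mem_Collect_eq not_le)
    have "t i * (lam i^2 - P) \<ge> 0" for i using t0[of i] gt[of i] by (intro mult_nonneg_nonneg) auto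
    then have "\<And>i. t i * (lam i^2 - P) = 0" using sumP sum_nonneg_eq_0_iff[of UNIV "\<lambda>i. t i * (lam i^2 - P)"] by simp
    then have "\<And>i. t i = 0" using gt by (metis diff_gt_0_iff_gt less_irrefl mult_eq_0_iff)
    then show False using t1 by simp
  qed
  have Kne: "{i. P \<le> lam i^2} \<noteq> {}"
  proof
    assume e: "{i. P \<le> lam i^2} = {}"
    then have gt: "\<And>i. lam i^2 < P" by (metis empty_iff mem_Collect_eq not_le)
    have "t i * (P - lam i^2) \<ge> 0" for i using t0[of i] gt[of i] by (intro mult_nonneg_nonneg) auto
    moreover have "(\<Sum>i\<in>UNIV. t i * (P - lam i^2)) = 0"
      using sumP by (simp add: right_diff_distrib sum_subtractf)
    ultimately have "\<And>i. t i * (P - lam i^2) = 0" using sum_nonneg_eq_0_iff[of UNIV "\<lambda>i. t i * (P - lam i^2)"] by simp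
    then have "\<And>i. t i = 0" using gt by (metis diff_gt_0_iff_gt less_irrefl mult_eq_0_iff)
    then show False using t1 by simp
  qed
  define a where "a = Max ((\<lambda>i. lam i^2) ` {i. lam i^2 \<le> P})"
  define b where "b = Min ((\<lambda>i. lam i^2) ` {i. P \<le> lam i^2})"
  have "a \<in> (\<lambda>i. lam i^2) ` {i. lam i^2 \<le> P}" unfolding a_def using Jne by (intro Max_in) auto
  then obtain j where j: "lam j^2 \<le> P" "a = lam j^2" by auto
  have "b \<in> (\<lambda>i. lam i^2) ` {i. P \<le> lam i^2}" unfolding b_def using Kne by (intro Min_in) auto
  then obtain k where k: "P \<le> lam k^2" "b = lam k^2" by auto
  have split: "lam i^2 \<le> lam j^2 \<or> lam k^2 \<le> lam i^2" for i
  proof (cases "lam i^2 \<le> P")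
    case True
    then have "lam i^2 \<le> a" unfolding a_def by (intro Max_ge) auto
    then show ?thesis using j by simp
  next
    case False
    then have "b \<le> lam i^2" unfolding b_def by (intro Min_le) auto
    then show ?thesis using k by simp
  qed
  define x where "x = lam j"
  define y where "y = lam k"
  have x0: "x > 0" and y0: "y > 0" using pos by (simp_all add: x_def y_def)
  have xy2: "x^2 \<le> y^2" using j k unfolding x_def y_def by linarith
  have hQ: "1/x^2 + 1/y^2 - P/(x^2*y^2) \<le> Q"
  proof -
    have trm: "t i * (1/x^2 + 1/y^2 - lam i^2/(x^2*y^2)) \<le> t i / lam i^2" for i
    proof -
      define z where "z = lam i^2"
      have z0: "z > 0" unfolding z_def using pos[of i] by simp
      have xx: "x^2 > 0" "y^2 > 0" using x0 y0 by simp_all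
      have zs: "z \<le> x^2 \<or> y^2 \<le> z" using split[of i] by (simp add: z_def x_def y_def)
      have "(z - x^2) * (z - y^2) \<ge> 0"
      proof (cases "z \<le> x^2")
        case True
        moreover have "z \<le> y^2" using True xy2 by linarith
        ultimately show ?thesis by (intro mult_nonpos_nonpos) auto
      next
        case False
        then have "y^2 \<le> z" using zs by simp
        moreover have "x^2 \<le> z" using False by simp
        ultimately show ?thesis by (intro mult_nonneg_nonneg) auto
      qed
      then have "1/x^2 + 1/y^2 - z/(x^2*y^2) \<le> 1/z" using aux[OF xx z0] by blast
      from mult_left_mono[OF this t0[of i]]
      show ?thesis unfolding z_def by simp
    qed
    have "1/x^2 + 1/y^2 - P/(x^2*y^2) = (\<Sum>i\<in>UNIV. t i * (1/x^2 + 1/y^2 - lam i^2/(x^2*y^2)))"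
      by (simp add: P_def distrib_left right_diff_distrib sum.distrib sum_subtractf sum_distrib_right[symmetric] t1 sum_divide_distrib[symmetric])
    also have "\<dots> \<le> Q" unfolding Q_def by (rule sum_mono[OF trm])
    finally show ?thesis .
  qed
  have xP: "x^2 \<le> P" using j unfolding x_def by simp
  have Py: "P \<le> y^2" using k unfolding y_def by simp
  have "\<exists>c d. c^2+d^2 > 0 \<and> m*(c^2+d^2) \<le> c^2*P + 2*c*d + d^2*Q"
    by (rule seg_lemma[OF x0 y0 xP Py hQ]) (use hM1 hS in \<open>auto simp: x_def y_def\<close>)
  then show ?thesis unfolding P_def Q_def .
qed


lemma pair_alg:
  fixes x y :: real
  assumes x0: "x > 0" and xy: "x < y" and h1: "x^3*y \<le> 1" and h2: "1 \<le> x*y^3"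
  defines "t \<equiv> x*(x*y^3 - 1) / ((y - x)*(1 + x^2*y^2))"
  shows "0 \<le> t" "t \<le> 1"
    "(x+y)^2/(1 + x^2*y^2) - (t*x^2 + (1-t)*y^2) = x*y"
    "(x+y)^2/(1 + x^2*y^2) - (t/x^2 + (1-t)/y^2) = 1/(x*y)"
proof -
  define E where "E = 1 + x^2*y^2"
  define D where "D = (y - x)*E"
  have E0: "E > 0" unfolding E_def by (simp add: add_pos_nonneg)
  have D0: "D > 0" unfolding D_def using E0 xy by simp
  have y0: "y > 0" using x0 xy by simp
  have td: "t = x*(x*y^3 - 1) / D" unfolding t_def D_def E_def ..
  have tD: "t * D = x*(x*y^3 - 1)" unfolding td using D0 by simp
  have t1D: "(1 - t) * D = y*(1 - x^3*y)"
  proof -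
    have "(1 - t) * D = D - x*(x*y^3 - 1)" using tD by (simp add: algebra_simps)
    also have "\<dots> = y*(1 - x^3*y)" unfolding D_def E_def by (simp add: algebra_simps power2_eq_square power3_eq_cube)
    finally show ?thesis .
  qed
  show "0 \<le> t"
  proof -
    have "0 \<le> t * D" using tD h2 x0 by simp
    then show ?thesis using D0 by (simp add: zero_le_mult_iff)
  qed
  show "t \<le> 1"
  proof -
    have "0 \<le> (1 - t) * D" using t1D h1 y0 by simp
    then show ?thesis using D0 by (simp add: zero_le_mult_iff)
  qed
  define V where "V = (x+y)^2/E"
  have VE: "V * E = (x+y)^2" unfolding V_def using E0 by simp
  have VD: "V * D = (y - x)*(x+y)^2" unfolding D_def using VE by (simp add: ac_simps)
  have "(V - (t*x^2 + (1-t)*y^2)) * D = V*D - (t*D)*x^2 - ((1-t)*D)*y^2" by (simp add: algebra_simps)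
  also have "\<dots> = (y - x)*(x+y)^2 - x*(x*y^3 - 1)*x^2 - y*(1 - x^3*y)*y^2" unfolding VD tD t1D ..
  also have "\<dots> = (x*y) * D" unfolding D_def E_def by (simp add: algebra_simps power2_eq_square power3_eq_cube)
  finally have "(V - (t*x^2 + (1-t)*y^2)) * D = (x*y) * D" .
  then show "(x+y)^2/(1 + x^2*y^2) - (t*x^2 + (1-t)*y^2) = x*y" using D0 unfolding V_def E_def by simp
  have "(V - (t/x^2 + (1-t)/y^2)) * D * (x*y) = V*D*(x*y) - (t*D)*(y/x) - ((1-t)*D)*(x/y)"
    using x0 y0 by (simp add: field_simps power2_eq_square)
  also have "\<dots> = (y - x)*(x+y)^2*(x*y) - x*(x*y^3 - 1)*(y/x) - y*(1 - x^3*y)*(x/y)" unfolding VD tD t1D ..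
  also have "\<dots> = (y - x)*(x+y)^2*(x*y) - (x*y^3 - 1)*y - (1 - x^3*y)*x" using x0 y0 by simp
  also have "\<dots> = D" unfolding D_def E_def by (simp add: algebra_simps power2_eq_square power3_eq_cube)
  finally have "(V - (t/x^2 + (1-t)/y^2)) * (D * (x*y)) = D" by (simp add: ac_simps)
  then have "V - (t/x^2 + (1-t)/y^2) = D / (D * (x*y))" using D0 x0 y0 by (simp add: eq_divide_eq)
  then show "(x+y)^2/(1 + x^2*y^2) - (t/x^2 + (1-t)/y^2) = 1/(x*y)" using D0 unfolding V_def E_def by simp
qed


lemma sum_two:
  fixes g :: "'n::finite \<Rightarrow> real"
  assumes "i \<noteq> j" and "\<And>k. k \<noteq> i \<Longrightarrow> k \<noteq> j \<Longrightarrow> g k = 0"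
  shows "(\<Sum>k\<in>UNIV. g k) = g i + g j"
proof -
  have "(\<Sum>k\<in>UNIV. g k) = (\<Sum>k\<in>{i,j}. g k)"
    by (rule sum.mono_neutral_right) (use assms in auto)
  then show ?thesis using assms(1) by simp
qed

lemma sum_one:
  fixes g :: "'n::finite \<Rightarrow> real"
  assumes "\<And>k. k \<noteq> i \<Longrightarrow> g k = 0"
  shows "(\<Sum>k\<in>UNIV. g k) = g i"
proof -
  have "(\<Sum>k\<in>UNIV. g k) = (\<Sum>k\<in>{i}. g k)"
    by (rule sum.mono_neutral_right) (use assms in auto)
  then show ?thesis by simp
qed

lemma delta_sq:
  fixes i :: "'n::finite"
  shows "(\<Sum>k\<in>UNIV. ((\<lambda>k. if k = i then 1 else 0::real) k)^2) = 1"
  by (subst sum_one[of i]) auto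

lemma upper_vertex:
  fixes lam :: "'n::finite \<Rightarrow> real"
  assumes pos: "\<And>i. lam i > 0"
  shows "I_sp ((\<chi> i j. complex_of_real (lam i * lam j + 1 / (lam i * lam j))) :: complex^'n^'n) \<le> lam i ^ 2 + 1 / lam i ^ 2"
proof -
  define w where "w k = (if k = i then 1 else 0::real)" for k
  have a: "(\<Sum>k\<in>UNIV. (w k)^2) = 1" unfolding w_def by (subst sum_one[of i]) auto
  have b: "(\<Sum>k\<in>UNIV. lam k^2 * (w k)^2) = lam i^2" unfolding w_def by (subst sum_one[of i]) auto
  have c: "(\<Sum>k\<in>UNIV. (w k)^2 / lam k^2) = 1 / lam i^2" unfolding w_def by (subst sum_one[of i]) auto
  have l0: "lam i ^2 > 0" using pos[of i] by simp
  show ?thesis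
  proof (rule upper_rk1[OF pos a])
    show "lam i ^ 2 + 1 / lam i ^ 2 - (\<Sum>k\<in>UNIV. lam k^2 * (w k)^2) \<ge> 0" unfolding b using l0 by simp
    show "lam i ^ 2 + 1 / lam i ^ 2 - (\<Sum>k\<in>UNIV. (w k)^2 / lam k^2) \<ge> 0" unfolding c using l0 by simp
    show "(lam i ^ 2 + 1 / lam i ^ 2 - (\<Sum>k\<in>UNIV. lam k^2 * (w k)^2)) *
          (lam i ^ 2 + 1 / lam i ^ 2 - (\<Sum>k\<in>UNIV. (w k)^2 / lam k^2)) \<ge> 1"
      unfolding b c using l0 by simp
  qed
qed

lemma upper_pair:
  fixes lam :: "'n::finite \<Rightarrow> real"
  assumes pos: "\<And>i. lam i > 0"
    and c1: "lam i < 1" and c2: "1 < lam j" and c3: "lam i ^ 2 \<le> 1 / (lam i * lam j)"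
    and c4: "1 / (lam i * lam j) \<le> lam j ^ 2"
  shows "I_sp ((\<chi> i j. complex_of_real (lam i * lam j + 1 / (lam i * lam j))) :: complex^'n^'n)
          \<le> (lam i + lam j)^2 / (1 + lam i ^ 2 * lam j ^ 2)"
proof -
  define x where "x = lam i"
  define y where "y = lam j"
  have x0: "x > 0" and y0: "y > 0" using pos unfolding x_def y_def by auto
  have xy: "x < y" using c1 c2 unfolding x_def y_def by simp
  have ij: "i \<noteq> j" using c1 c2 by auto
  have xy0: "x*y > 0" using x0 y0 by simp
  have h1: "x^3*y \<le> 1"
  proof -
    have "x^2 * (x*y) \<le> 1" using c3 xy0 unfolding x_def y_def by (simp add: pos_le_divide_eq)
    then show ?thesis by (simp add: power2_eq_square power3_eq_cube ac_simps)
  qed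
  have h2: "1 \<le> x*y^3"
  proof -
    have "1 \<le> y^2 * (x*y)" using c4 xy0 unfolding x_def y_def by (simp add: pos_divide_le_eq)
    then show ?thesis by (simp add: power2_eq_square power3_eq_cube ac_simps)
  qed
  define t where "t = x*(x*y^3 - 1) / ((y - x)*(1 + x^2*y^2))"
  note pa = pair_alg[OF x0 xy h1 h2, folded t_def]
  define w where "w k = (if k = i then sqrt t else if k = j then sqrt (1 - t) else 0)" for k
  have wi: "(w i)^2 = t" unfolding w_def using pa(1) by simp
  have wj: "(w j)^2 = 1 - t" unfolding w_def using pa(2) ij by simp
  have w0: "\<And>k. k \<noteq> i \<Longrightarrow> k \<noteq> j \<Longrightarrow> w k = 0" unfolding w_def by simp
  have a: "(\<Sum>k\<in>UNIV. (w k)^2) = 1"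
    using sum_two[OF ij, of "\<lambda>k. (w k)^2"] w0 wi wj by simp
  have b: "(\<Sum>k\<in>UNIV. lam k^2 * (w k)^2) = t*x^2 + (1-t)*y^2"
    using sum_two[OF ij, of "\<lambda>k. lam k^2 * (w k)^2"] w0 wi wj unfolding x_def y_def by (simp add: ac_simps)
  have c: "(\<Sum>k\<in>UNIV. (w k)^2 / lam k^2) = t/x^2 + (1-t)/y^2"
    using sum_two[OF ij, of "\<lambda>k. (w k)^2 / lam k^2"] w0 wi wj unfolding x_def y_def by simp
  have V: "(lam i + lam j)^2 / (1 + lam i ^ 2 * lam j ^ 2) = (x+y)^2/(1 + x^2*y^2)" unfolding x_def y_def ..
  show ?thesis unfolding V
  proof (rule upper_rk1[OF pos a])
    show "(x+y)^2/(1 + x^2*y^2) - (\<Sum>k\<in>UNIV. lam k^2 * (w k)^2) \<ge> 0" unfolding b pa(3) using xy0 by simp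
    show "(x+y)^2/(1 + x^2*y^2) - (\<Sum>k\<in>UNIV. (w k)^2 / lam k^2) \<ge> 0" unfolding c pa(4) using xy0 by simp
    show "((x+y)^2/(1 + x^2*y^2) - (\<Sum>k\<in>UNIV. lam k^2 * (w k)^2)) *
          ((x+y)^2/(1 + x^2*y^2) - (\<Sum>k\<in>UNIV. (w k)^2 / lam k^2)) \<ge> 1"
      unfolding b c pa(3) pa(4) using x0 y0 by simp
  qed
qed

theorem mainTheorem14:
  fixes lam :: "'n::finite \<Rightarrow> real"
  assumes pos: "\<And>i. lam i > 0"
  defines "Lam \<equiv> (\<chi> i j. complex_of_real (lam i * lam j + 1 / (lam i * lam j))) :: complex^'n^'n"
      and "M1 \<equiv> Min {lam i ^ 2 + 1 / lam i ^ 2 | i. True}"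
      and "S \<equiv> {(lam i + lam j)^2 / (1 + lam i ^ 2 * lam j ^ 2) | i j.
                 lam i < 1 \<and> 1 < lam j \<and> lam i ^ 2 \<le> 1 / (lam i * lam j)
                 \<and> 1 / (lam i * lam j) \<le> lam j ^ 2}"
  shows "I_sp Lam = (if S = {} then M1 else min M1 (Inf S)) \<and>
         (((\<forall>i. lam i \<ge> 1) \<or> (\<forall>i. lam i \<le> 1)) \<longrightarrow> I_sp Lam = M1)"
proof -
  define m where "m = (if S = {} then M1 else min M1 (Inf S))"
  have M1set: "{lam i ^ 2 + 1 / lam i ^ 2 | i. True} = range (\<lambda>i. lam i ^ 2 + 1 / lam i ^ 2)" by auto
  have finM: "finite {lam i ^ 2 + 1 / lam i ^ 2 | i. True}" unfolding M1set by simp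
  have neM: "{lam i ^ 2 + 1 / lam i ^ 2 | i. True} \<noteq> {}" unfolding M1set by simp
  have M1le: "\<And>i. M1 \<le> lam i ^ 2 + 1 / lam i ^ 2" unfolding M1_def using finM by (intro Min_le) auto
  obtain i0 where i0: "M1 = lam i0 ^ 2 + 1 / lam i0 ^ 2"
    using Min_in[OF finM neM] unfolding M1_def by auto
  have finS: "finite S"
  proof -
    have "S \<subseteq> (\<lambda>(i,j). (lam i + lam j)^2 / (1 + lam i ^ 2 * lam j ^ 2)) ` UNIV" unfolding S_def by auto
    then show ?thesis by (rule finite_subset) simp
  qed
  have mM1: "m \<le> M1" unfolding m_def by simp
  have mS: "\<And>v. v \<in> S \<Longrightarrow> m \<le> v"
  proof -
    fix v assume v: "v \<in> S"
    then have "S \<noteq> {}" by auto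
    then have "m \<le> Inf S" unfolding m_def by simp
    also have "Inf S \<le> v" by (rule cInf_le_finite[OF finS v])
    finally show "m \<le> v" .
  qed
  have lower: "m \<le> I_sp Lam"
  proof -
    define W where "W = {spec_norm (hadamard Lam B) | B. psd B \<and> spec_norm B = 1}"
    have "spec_norm (hadamard Lam (rk1 (\<lambda>k. if k = i0 then 1 else 0))) \<in> W"
      unfolding W_def using rk1_psd rk1_norm[OF delta_sq[of i0]] by blast
    then have neW: "W \<noteq> {}" by auto
    have "m \<le> Inf W"
    proof (rule cInf_greatest[OF neW])
      fix v assume "v \<in> W"
      then obtain B where B: "psd B" "spec_norm B = 1" and v: "v = spec_norm (hadamard Lam B)"
        unfolding W_def by auto
      show "m \<le> v" unfolding v Lam_def
      proof (rule lower_bound[OF pos B])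
        fix t :: "'n \<Rightarrow> real"
        assume t0: "\<And>i. t i \<ge> 0" and t1: "(\<Sum>i\<in>UNIV. t i) = 1"
        show "\<exists>c d. c^2+d^2 > 0 \<and>
           m*(c^2+d^2) \<le> c^2*(\<Sum>i\<in>UNIV. t i * lam i^2) + 2*c*d + d^2*(\<Sum>i\<in>UNIV. t i / lam i^2)"
        proof (rule real_H[OF pos _ _ t0 t1])
          fix i show "m \<le> lam i ^ 2 + 1 / lam i ^ 2" using mM1 M1le[of i] by linarith
        next
          fix i j
          assume "lam i < 1" "1 < lam j" "lam i ^ 2 \<le> 1 / (lam i * lam j)" "1 / (lam i * lam j) \<le> lam j ^ 2"
          then have "(lam i + lam j)^2 / (1 + lam i ^ 2 * lam j ^ 2) \<in> S" unfolding S_def by blast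
          then show "m \<le> (lam i + lam j)^2 / (1 + lam i ^ 2 * lam j ^ 2)" by (rule mS)
        qed
      qed
    qed
    then show ?thesis unfolding I_sp_def W_def .
  qed
  have upM1: "I_sp Lam \<le> M1" unfolding i0 Lam_def by (rule upper_vertex[OF pos])
  have upper: "I_sp Lam \<le> m"
  proof (cases "S = {}")
    case True then show ?thesis using upM1 unfolding m_def by simp
  next
    case False
    have "Inf S \<in> S" using Min_in[OF finS False] cInf_eq_Min[OF finS False] by simp
    then obtain i j where ij: "lam i < 1" "1 < lam j" "lam i ^ 2 \<le> 1 / (lam i * lam j)" "1 / (lam i * lam j) \<le> lam j ^ 2"
      and eq: "Inf S = (lam i + lam j)^2 / (1 + lam i ^ 2 * lam j ^ 2)" unfolding S_def by blast
    have "I_sp Lam \<le> Inf S" unfolding eq Lam_def by (rule upper_pair[OF pos ij])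
    then show ?thesis using upM1 False unfolding m_def by simp
  qed
  have main: "I_sp Lam = m" using lower upper by simp
  have "((\<forall>i. lam i \<ge> 1) \<or> (\<forall>i. lam i \<le> 1)) \<longrightarrow> S = {}"
    unfolding S_def by (auto simp: not_le[symmetric])
  then show ?thesis using main unfolding m_def by auto
qed

end
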